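(* Let $n=2$, assume Assumptions A and B, $c_1^2+c_2^2>0$, and that the solution $S$ of (IVP) exists on $[r_0,\infty)$ with limit $s_\infty=\lim_{r\to\infty}S(r)$. If $s_\infty\notin\{0,1\}$, then $c_1c_2>0$ and $s_\infty=s^*$.
   Context: For $i=1,2$, $g_i(s)=a^{(i)}_0+a^{(i)}_1s^{\alpha^{(i)}_1}+\dots+a^{(i)}_{N_i}s^{\alpha^{(i)}_{N_i}}$ ($s\ge0$) with $N_i\ge0$, $a^{(i)}_0>0$, $a^{(i)}_j\ge0$, real $0<\alpha^{(i)}_1<\dots<\alpha^{(i)}_{N_i}$; $G_i(u)=g_i(|u|)u$ for $u\in\mathbb R$. Assumption A: $f_1,f_2\in C([0,1])\cap C^1((0,1))$, $f_1(0)=0$, $f_2(1)=0$, $f_1'>0$, $f_2'<0$ on $(0,1)$. Assumption B: $p_c'\in C^1((0,1))$, $p_c'>0$ on $(0,1)$. $F_i(S)=1/(p_c'(S)f_i(S))$. (IVP) with dimension $n$: $S'(r)=G_2(c_2r^{1-n})F_2(S)-G_1(c_1r^{1-n})F_1(S)$ for $r>r_0$, $S(r_0)=s_0\in(0,1)$, $0<S<1$. The function $f=f_1/f_2$ is a strictly increasing bijection of $(0,1)$ onto $(0,\infty)$; when $c_1c_2>0$ define $s^*=f^{-1}\big(c_1a^{(1)}_0/(c_2a^{(2)}_0)\big)\in(0,1)$. *)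

theory Defs
  imports "HOL-Analysis.Analysis"
begin

definition gpoly :: "(nat \<Rightarrow> real) \<Rightarrow> (nat \<Rightarrow> real) \<Rightarrow> nat \<Rightarrow> real \<Rightarrow> real" where
  "gpoly a alpha N s = a 0 + (\<Sum>j=1..N. a j * s powr alpha j)"

definition admissible_g :: "(nat \<Rightarrow> real) \<Rightarrow> (nat \<Rightarrow> real) \<Rightarrow> nat \<Rightarrow> bool" where
  "admissible_g a alpha N \<longleftrightarrow> a 0 > 0 \<and> (\<forall>j\<in>{1..N}. a j \<ge> 0)
     \<and> (N \<ge> 1 \<longrightarrow> alpha 1 > 0) \<and> strict_mono_on {1..N} alpha"

definition Gfun :: "(nat \<Rightarrow> real) \<Rightarrow> (nat \<Rightarrow> real) \<Rightarrow> nat \<Rightarrow> real \<Rightarrow> real" where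
  "Gfun a alpha N u = gpoly a alpha N \<bar>u\<bar> * u"

definition C1_on :: "real set \<Rightarrow> (real \<Rightarrow> real) \<Rightarrow> bool" where
  "C1_on A f \<longleftrightarrow> (\<exists>f'. (\<forall>x\<in>A. (f has_real_derivative f' x) (at x)) \<and> continuous_on A f')"

definition assumptionA :: "(real \<Rightarrow> real) \<Rightarrow> (real \<Rightarrow> real) \<Rightarrow> bool" where
  "assumptionA f1 f2 \<longleftrightarrow>
     continuous_on {0..1} f1 \<and> continuous_on {0..1} f2 \<and>
     C1_on {0<..<1} f1 \<and> C1_on {0<..<1} f2 \<and>
     f1 0 = 0 \<and> f2 1 = 0 \<and>
     (\<forall>x\<in>{0<..<1}. deriv f1 x > 0 \<and> deriv f2 x < 0)"

text \<open>Assumption B (dpc stands for p_c').\<close>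
definition assumptionB :: "(real \<Rightarrow> real) \<Rightarrow> bool" where
  "assumptionB dpc \<longleftrightarrow> C1_on {0<..<1} dpc \<and> (\<forall>x\<in>{0<..<1}. dpc x > 0)"

definition Ffun :: "(real \<Rightarrow> real) \<Rightarrow> (real \<Rightarrow> real) \<Rightarrow> real \<Rightarrow> real" where
  "Ffun dpc fi s = 1 / (dpc s * fi s)"

definition solves_IVP ::
  "nat \<Rightarrow> (nat \<Rightarrow> real) \<Rightarrow> (nat \<Rightarrow> real) \<Rightarrow> nat \<Rightarrow> (nat \<Rightarrow> real) \<Rightarrow> (nat \<Rightarrow> real) \<Rightarrow> nat \<Rightarrow>
   (real \<Rightarrow> real) \<Rightarrow> (real \<Rightarrow> real) \<Rightarrow> (real \<Rightarrow> real) \<Rightarrow> real \<Rightarrow> real \<Rightarrow> real \<Rightarrow> real \<Rightarrow>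
   (real \<Rightarrow> real) \<Rightarrow> bool" where
  "solves_IVP n a1 al1 N1 a2 al2 N2 f1 f2 dpc c1 c2 r0 s0 S \<longleftrightarrow>
     continuous_on {r0..} S \<and> S r0 = s0 \<and>
     (\<forall>r\<ge>r0. 0 < S r \<and> S r < 1) \<and>
     (\<forall>r>r0. (S has_real_derivative
         (Gfun a2 al2 N2 (c2 * r powr (1 - real n)) * Ffun dpc f2 (S r)
          - Gfun a1 al1 N1 (c1 * r powr (1 - real n)) * Ffun dpc f1 (S r))) (at r))"

definition sstar :: "(real \<Rightarrow> real) \<Rightarrow> (real \<Rightarrow> real) \<Rightarrow> real \<Rightarrow> real \<Rightarrow> real \<Rightarrow> real \<Rightarrow> real" where
  "sstar f1 f2 c1 c2 a10 a20 = (THE s. s \<in> {0<..<1} \<and> f1 s / f2 s = c1 * a10 / (c2 * a20))"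

end

theory Submission
  imports Defs
begin

lemma mono_from_deriv:
  fixes f f' :: "real \<Rightarrow> real"
  assumes cont: "continuous_on {0..1} f"
    and der: "\<And>x. x \<in> {0<..<1} \<Longrightarrow> (f has_real_derivative f' x) (at x) \<and> f' x > 0"
    and ab: "0 \<le> a" "a < b" "b \<le> 1"
  shows "f a < f b"
proof -
  have "continuous_on {a..b} f" using ab by (intro continuous_on_subset[OF cont]) auto
  moreover have "\<And>x. a < x \<Longrightarrow> x < b \<Longrightarrow> f differentiable (at x)"
    using der ab by (meson greaterThanLessThan_iff less_le_trans le_less_trans real_differentiable_def)
  ultimately obtain l z where z: "a < z" "z < b" "DERIV f z :> l" "f b - f a = (b - a) * l"
    using MVT[OF ab(2)] by blast
  have "z \<in> {0<..<1}" using z ab by auto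
  then have "l = f' z" "f' z > 0" using der z(3) DERIV_unique by blast+
  then show ?thesis using z ab by (metis diff_gt_0_iff_gt mult_pos_pos)
qed

lemma log_growth:
  fixes S D :: "real \<Rightarrow> real"
  assumes der: "\<forall>r>r0. (S has_real_derivative D r) (at r)"
    and lim: "((\<lambda>r. r * D r) \<longlongrightarrow> L) at_top" and L: "L > 0" and r0: "r0 > 0"
    and bd: "\<forall>r>r0. S r < B"
  shows False
proof -
  have "\<forall>\<^sub>F r in at_top. r * D r > L/2" using lim L
    by (intro order_tendstoD(1)) auto
  then obtain R0 where R0: "\<And>r. r \<ge> R0 \<Longrightarrow> r * D r > L/2" by (auto simp: eventually_at_top_linorder)
  define R where "R = max R0 (r0 + 1)"
  have R: "R > r0" "R > 0" "\<And>r. r \<ge> R \<Longrightarrow> r * D r > L/2" using R0 r0 unfolding R_def by auto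
  define h where "h t = S t - L/2 * ln t" for t
  have hmono: "h R \<le> h r" if "r \<ge> R" for r
  proof (rule DERIV_nonneg_imp_increasing_open[OF that])
    show "continuous_on {R..r} h"
    proof (intro continuous_at_imp_continuous_on ballI)
      fix x assume "x \<in> {R..r}"
      then have xp: "x > 0" "x > r0" using R by auto
      have "(h has_real_derivative D x - L/2 * (1/x)) (at x)"
        unfolding h_def using der xp by (auto intro!: derivative_eq_intros)
      then show "isCont h x" by (rule DERIV_isCont)
    qed
  next
    fix x assume x0: "R < x" "x < r"
    then have x: "R \<le> x \<and> x \<le> r" by auto
    then have xp: "x > 0" "x > r0" using R by auto
    have "(h has_real_derivative D x - L/2 * (1/x)) (at x)"
      unfolding h_def using der xp
      by (auto intro!: derivative_eq_intros)
    moreover have "D x - L/2 * (1/x) \<ge> 0"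
    proof -
      have "x * D x > L/2" using R(3) x by auto
      then have "D x > L/2 / x" using xp by (simp add: field_simps)
      then show ?thesis by simp
    qed
    ultimately show "\<exists>y. (h has_real_derivative y) (at x) \<and> 0 \<le> y" by blast
  qed
  define r where "r = R * exp (2 * (B - S R) / L + 1)"
  have "S R < B" using bd R by auto
  then have "2 * (B - S R) / L + 1 > 0" using L by (simp add: field_simps)
  then have "exp (2 * (B - S R) / L + 1) \<ge> 1" by simp
  then have rR: "r \<ge> R" unfolding r_def using R by simp
  have "ln r = ln R + (2 * (B - S R) / L + 1)" unfolding r_def using R by (simp add: ln_mult)
  then have "S r \<ge> S R + L/2 * (2 * (B - S R) / L + 1)"
    using hmono[OF rR] unfolding h_def by (simp add: algebra_simps)
  moreover have "S R + L/2 * (2 * (B - S R) / L + 1) = B + L/2" using L by (simp add: field_simps)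
  ultimately have "S r > B" using L by linarith
  moreover have "S r < B" using bd R rR by auto
  ultimately show False by simp
qed

lemma gpoly_lim:
  assumes adm: "admissible_g a alpha N"
  shows "((\<lambda>r::real. gpoly a alpha N (\<bar>c\<bar> / r)) \<longlongrightarrow> a 0) at_top"
proof -
  have pos: "alpha j > 0" if "j \<in> {1..N}" for j
  proof -
    have "N \<ge> 1" using that by auto
    then have a1: "alpha 1 > 0" using adm unfolding admissible_g_def by auto
    show ?thesis
    proof (cases "j = 1")
      case True then show ?thesis using a1 by simp
    next
      case False
      then have "1 < j" using that by auto
      moreover have "1 \<in> {1..N}" using \<open>N \<ge> 1\<close> by auto
      ultimately have "alpha 1 < alpha j" using adm that unfolding admissible_g_def strict_mono_on_def by blast
      then show ?thesis using a1 by simp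
    qed
  qed
  have z: "((\<lambda>r::real. \<bar>c\<bar> / r) \<longlongrightarrow> 0) at_top"
    by (intro tendsto_divide_0[OF tendsto_const] filterlim_at_top_imp_at_infinity filterlim_ident)
  have "((\<lambda>r. a 0 + (\<Sum>j=1..N. a j * (\<bar>c\<bar> / r) powr alpha j)) \<longlongrightarrow> a 0 + (\<Sum>j=1..N. a j * 0)) at_top"
  proof (intro tendsto_add tendsto_const tendsto_sum tendsto_mult)
    fix j assume "j \<in> {1..N}"
    then show "((\<lambda>r. (\<bar>c\<bar> / r) powr alpha j) \<longlongrightarrow> 0) at_top"
      using pos by (intro tendsto_zero_powrI[OF z tendsto_const]) (auto simp: eventually_at_top_linorder intro!: exI[of _ 1])
  qed
  then show ?thesis unfolding gpoly_def by simp
qed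

lemma C1_der:
  assumes "C1_on {0<..<1} f"
  obtains f' where "\<And>x. x \<in> {0<..<1} \<Longrightarrow> (f has_real_derivative f' x) (at x)"
  using assms unfolding C1_on_def by blast

theorem lemma2p4:
  fixes a1 al1 a2 al2 :: "nat \<Rightarrow> real" and N1 N2 :: nat
    and f1 f2 dpc S :: "real \<Rightarrow> real" and c1 c2 r0 s0 s_inf :: real
  assumes "admissible_g a1 al1 N1" and "admissible_g a2 al2 N2"
    and "assumptionA f1 f2" and "assumptionB dpc"
    and "c1^2 + c2^2 > 0"
    and "r0 > 0" and "s0 \<in> {0<..<1}"
    and "solves_IVP 2 a1 al1 N1 a2 al2 N2 f1 f2 dpc c1 c2 r0 s0 S"
    and "(S \<longlongrightarrow> s_inf) at_top"
    and "s_inf \<notin> {0, 1}"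
  shows "c1 * c2 > 0 \<and> s_inf = sstar f1 f2 c1 c2 (a1 0) (a2 0)"
proof -
  note A = assms(3)[unfolded assumptionA_def]
  note B = assms(4)[unfolded assumptionB_def]
  note sol = assms(8)[unfolded solves_IVP_def]
  obtain f1' where f1': "\<And>x. x \<in> {0<..<1} \<Longrightarrow> (f1 has_real_derivative f1' x) (at x)"
    using A C1_der by blast
  obtain f2' where f2': "\<And>x. x \<in> {0<..<1} \<Longrightarrow> (f2 has_real_derivative f2' x) (at x)"
    using A C1_der by blast
  obtain p' where p': "\<And>x. x \<in> {0<..<1} \<Longrightarrow> (dpc has_real_derivative p' x) (at x)"
    using B C1_der by blast
  have f1'pos: "f1' x > 0" if "x \<in> {0<..<1}" for x
    using A f1'[OF that] that DERIV_imp_deriv by fastforce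
  have f2'neg: "f2' x < 0" if "x \<in> {0<..<1}" for x
    using A f2'[OF that] that DERIV_imp_deriv by fastforce
  have inc1: "f1 x < f1 y" if "0 \<le> x" "x < y" "y \<le> 1" for x y
    using mono_from_deriv[of f1 f1' x y] A f1' f1'pos that by blast
  have inc2: "- f2 x < - f2 y" if "0 \<le> x" "x < y" "y \<le> 1" for x y
  proof (rule mono_from_deriv[of "\<lambda>x. - f2 x" "\<lambda>x. - f2' x" x y])
    show "continuous_on {0..1} (\<lambda>x. - f2 x)" using A by (intro continuous_on_minus) auto
    fix z :: real assume "z \<in> {0<..<1}"
    then show "((\<lambda>x. - f2 x) has_real_derivative - f2' z) (at z) \<and> - f2' z > 0"
      using f2' f2'neg by (auto intro!: derivative_eq_intros)
  qed (use that in auto)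
  have f1pos: "f1 x > 0" if "x \<in> {0<..<1}" for x using inc1[of 0 x] A that by auto
  have f2pos: "f2 x > 0" if "x \<in> {0<..<1}" for x using inc2[of x 1] A that by auto
  have sin: "s_inf \<in> {0<..<1}"
  proof -
    have ev: "\<forall>\<^sub>F r in at_top. S r \<in> {0..1}"
      using sol by (auto simp: eventually_at_top_linorder intro!: exI[of _ r0] less_imp_le)
    have "s_inf \<in> {0..1}"
      by (rule Lim_in_closed_set[OF closed_atLeastAtMost ev _ assms(9)]) simp
    then show ?thesis using assms(10) by auto
  qed
  define F1 where "F1 = Ffun dpc f1"
  define F2 where "F2 = Ffun dpc f2"
  define D where "D r = Gfun a2 al2 N2 (c2 * r powr (1 - real 2)) * F2 (S r)
          - Gfun a1 al1 N1 (c1 * r powr (1 - real 2)) * F1 (S r)" for r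
  have der: "\<forall>r>r0. (S has_real_derivative D r) (at r)" using sol unfolding D_def F1_def F2_def by blast
  define L where "L = c2 * a2 0 * F2 s_inf - c1 * a1 0 * F1 s_inf"
  have contF: "isCont F1 s_inf" "isCont F2 s_inf"
  proof -
    have "isCont dpc s_inf" "isCont f1 s_inf" "isCont f2 s_inf"
      using sin p' f1' f2' DERIV_isCont by blast+
    moreover have "dpc s_inf * f1 s_inf \<noteq> 0" "dpc s_inf * f2 s_inf \<noteq> 0"
      using sin B f1pos f2pos by (metis greaterThanLessThan_iff less_irrefl mult_pos_pos)+
    ultimately show "isCont F1 s_inf" "isCont F2 s_inf" unfolding F1_def F2_def Ffun_def
      by (auto intro!: continuous_intros)
  qed
  have limF: "((\<lambda>r. F1 (S r)) \<longlongrightarrow> F1 s_inf) at_top" "((\<lambda>r. F2 (S r)) \<longlongrightarrow> F2 s_inf) at_top"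
    using contF assms(9) isCont_tendsto_compose by blast+
  have eqD: "\<forall>\<^sub>F r in at_top. gpoly a2 al2 N2 (\<bar>c2\<bar> / r) * c2 * F2 (S r)
        - gpoly a1 al1 N1 (\<bar>c1\<bar> / r) * c1 * F1 (S r) = r * D r"
  proof (rule eventually_mono[OF eventually_gt_at_top[of 0]])
    fix r :: real assume r: "r > 0"
    have pw: "r powr (1 - real 2) = 1 / r" using r by (simp add: powr_minus_divide)
    show "gpoly a2 al2 N2 (\<bar>c2\<bar> / r) * c2 * F2 (S r)
        - gpoly a1 al1 N1 (\<bar>c1\<bar> / r) * c1 * F1 (S r) = r * D r"
      unfolding D_def pw Gfun_def using r by (simp add: abs_divide field_simps)
  qed
  have limD: "((\<lambda>r. r * D r) \<longlongrightarrow> L) at_top"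
  proof -
    have "((\<lambda>r. gpoly a2 al2 N2 (\<bar>c2\<bar> / r) * c2 * F2 (S r)
        - gpoly a1 al1 N1 (\<bar>c1\<bar> / r) * c1 * F1 (S r)) \<longlongrightarrow> a2 0 * c2 * F2 s_inf - a1 0 * c1 * F1 s_inf) at_top"
      by (intro tendsto_diff tendsto_mult gpoly_lim assms(1,2) tendsto_const limF)
    then have "((\<lambda>r. gpoly a2 al2 N2 (\<bar>c2\<bar> / r) * c2 * F2 (S r)
        - gpoly a1 al1 N1 (\<bar>c1\<bar> / r) * c1 * F1 (S r)) \<longlongrightarrow> L) at_top"
      unfolding L_def by (simp add: algebra_simps)
    then show ?thesis using tendsto_cong[OF eqD] by simp
  qed
  have L0: "L = 0"
  proof (rule ccontr)
    assume "L \<noteq> 0"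
    then consider "L > 0" | "L < 0" by linarith
    then show False
    proof cases
      case 1
      show False
        by (rule log_growth[OF der limD 1 assms(6), of 1]) (use sol in auto)
    next
      case 2
      have der': "\<forall>r>r0. ((\<lambda>r. - S r) has_real_derivative - D r) (at r)"
        using der by (auto intro!: derivative_eq_intros)
      have "((\<lambda>r. r * - D r) \<longlongrightarrow> - L) at_top" using tendsto_minus[OF limD] by simp
      then show False
        by (rule log_growth[OF der' _ _ assms(6), of "-L" 0]) (use sol 2 in auto)
    qed
  qed
  have p: "dpc s_inf > 0" using B sin by auto
  have q1: "f1 s_inf > 0" "f2 s_inf > 0" using f1pos f2pos sin by auto
  have key: "c2 * a2 0 * f1 s_inf = c1 * a1 0 * f2 s_inf"
    using L0 p q1 unfolding L_def F1_def F2_def Ffun_def by (simp add: field_simps)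
  have a0: "a1 0 > 0" "a2 0 > 0" using assms(1,2) unfolding admissible_g_def by auto
  have c12: "c1 * c2 > 0"
  proof -
    have "c1 \<noteq> 0 \<or> c2 \<noteq> 0" using assms(5) by (metis add.right_neutral power2_eq_square mult_zero_left less_irrefl)
    have c1nz: "c1 \<noteq> 0"
    proof
      assume "c1 = 0"
      then have "c2 \<noteq> 0" using \<open>c1 \<noteq> 0 \<or> c2 \<noteq> 0\<close> by simp
      then show False using key \<open>c1 = 0\<close> a0 q1 by simp
    qed
    have c2nz: "c2 \<noteq> 0"
    proof
      assume "c2 = 0"
      then show False using key c1nz a0 q1 by simp
    qed
    have "(c1 * c2) * (a1 0 * f2 s_inf) = c2 * c2 * (a2 0 * f1 s_inf)"
      using key by (metis mult.assoc mult.commute mult.left_commute)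
    moreover have "c2 * c2 * (a2 0 * f1 s_inf) > 0"
    proof -
      have "c2 * c2 > 0" using c2nz by (auto simp add: zero_less_mult_iff linorder_neq_iff)
      then show ?thesis using a0 q1 by simp
    qed
    moreover have "a1 0 * f2 s_inf > 0" using a0 q1 by simp
    ultimately show ?thesis by (metis zero_less_mult_pos2 mult.commute)
  qed
  have rat: "f1 s_inf / f2 s_inf = c1 * a1 0 / (c2 * a2 0)"
  proof -
    have "c2 \<noteq> 0" using c12 by auto
    then have "c2 * a2 0 \<noteq> 0" using a0 by simp
    then show ?thesis using key q1 by (simp add: field_simps)
  qed
  have ratmono: "f1 x / f2 x < f1 y / f2 y" if "x \<in> {0<..<1}" "y \<in> {0<..<1}" "x < y" for x y
  proof -
    have "f1 x < f1 y" "f2 y < f2 x" using inc1 inc2 that by auto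
    moreover have "f1 x > 0" "f2 y > 0" using f1pos f2pos that by auto
    ultimately show ?thesis by (simp add: frac_less)
  qed
  have "sstar f1 f2 c1 c2 (a1 0) (a2 0) = s_inf"
    unfolding sstar_def
  proof (rule the_equality)
    show "s_inf \<in> {0<..<1} \<and> f1 s_inf / f2 s_inf = c1 * a1 0 / (c2 * a2 0)" using sin rat by simp
    fix t assume t: "t \<in> {0<..<1} \<and> f1 t / f2 t = c1 * a1 0 / (c2 * a2 0)"
    show "t = s_inf"
    proof (rule ccontr)
      assume "t \<noteq> s_inf"
      then consider "t < s_inf" | "s_inf < t" by linarith
      then show False using ratmono[of t s_inf] ratmono[of s_inf t] t sin rat by cases auto
    qed
  qed
  then show ?thesis using c12 by simp
qed

end
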